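(* Let $q\in X^*\setminus\{e\}$, let $q_0$ be the shortest word in $P_q$, and write $q=q_0^k\cdot\bar q$ with $\bar q\sqsubset q_0$ (so $k=\lfloor|q|/|q_0|\rfloor$). Then $\sqrt[*]{P_q}$ is a code having a delay of decipherability of at most $k+1$; that is, for all $w,w',v_1,\dots,v_{k+1}\in\sqrt[*]{P_q}$ and $u\in(\sqrt[*]{P_q})^*$, the relation $w\cdot v_1\cdots v_{k+1}\sqsubseteq w'\cdot u$ implies $w=w'$.
   Context: $X$ is a finite alphabet; $X^*$ the finite words (empty word $e$); $|w|$ is length; $w\sqsubseteq\eta$ means $w$ is a prefix of $\eta$, $w\sqsubset\eta$ a proper prefix. $P_q:=\{v: e\sqsubset v\sqsubseteq q\sqsubset v\cdot q\}$; $q_0$ is its shortest element. The star root is $\sqrt[*]{P_q}:=P_q\setminus(P_q^2\cdot P_q^* )$. A language $C$ is a code if $w_1\cdots w_l=v_1\cdots v_k$ with all $w_i,v_j\in C$ implies $l=k$ and $w_i=v_i$ for all $i$; it has delay of decipherability $m$ if for all $w,w',v_1,\dots,v_m\in C$ and $u\in C^*$, $w\cdot v_1\cdots v_m\sqsubseteq w'\cdot u$ implies $w=w'$. *)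

theory Defs
  imports Main "HOL-Library.Sublist"
begin

(* Words over an alphabet 'a are lists; e = []; \<sqsubseteq> = prefix, \<sqsubset> = strict_prefix. *)

definition Pq :: "'a list \<Rightarrow> 'a list set" where
  "Pq q = {v. strict_prefix [] v \<and> prefix v q \<and> strict_prefix q (v @ q)}"

definition lang_conc :: "'a list set \<Rightarrow> 'a list set \<Rightarrow> 'a list set" where
  "lang_conc A B = {u @ v | u v. u \<in> A \<and> v \<in> B}"

definition lang_star :: "'a list set \<Rightarrow> 'a list set" where
  "lang_star A = {concat ws | ws. set ws \<subseteq> A}"

definition star_root :: "'a list set \<Rightarrow> 'a list set" where
  "star_root P = P - lang_conc (lang_conc P P) (lang_star P)"

definition is_code :: "'a list set \<Rightarrow> bool" where
  "is_code C \<longleftrightarrow> (\<forall>ws vs. set ws \<subseteq> C \<and> set vs \<subseteq> C \<and> concat ws = concat vs \<longrightarrow> ws = vs)"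

definition has_delay :: "'a list set \<Rightarrow> nat \<Rightarrow> bool" where
  "has_delay C m \<longleftrightarrow> (\<forall>w w' vs u. w \<in> C \<and> w' \<in> C \<and> length vs = m \<and> set vs \<subseteq> C
      \<and> u \<in> lang_star C \<and> prefix (w @ concat vs) (w' @ u) \<longrightarrow> w = w')"

end

theory Submission
  imports Defs
begin

lemma Pq_iff: "v \<in> Pq q \<longleftrightarrow> v \<noteq> [] \<and> prefix v q \<and> prefix q (v @ q)"
  unfolding Pq_def strict_prefix_def by auto

lemma per_concat: "set xs \<subseteq> Pq q \<Longrightarrow> prefix q (concat xs @ q)"
proof (induction xs)
  case Nil then show ?case by simp
next
  case (Cons x xs)
  then have h1: "prefix q (concat xs @ q)" and h2: "prefix q (x @ q)" by (auto simp: Pq_iff)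
  have "prefix (x @ q) (x @ concat xs @ q)" using h1 by simp
  then have "prefix q (x @ concat xs @ q)" using prefix_order.trans[OF h2] by simp
  then show ?case by simp
qed

lemma key: "prefix q (s @ X @ q) \<Longrightarrow> prefix q (X @ q) \<Longrightarrow> prefix q (s @ q)"
proof -
  assume a: "prefix q (s @ X @ q)" and b: "prefix q (X @ q)"
  have c: "prefix (s @ q) (s @ X @ q)" using b by simp
  show ?thesis using prefix_length_prefix[OF a c] by simp
qed

lemma mk: "s \<noteq> [] \<Longrightarrow> length s \<le> length q \<Longrightarrow> prefix q (s @ q) \<Longrightarrow> s \<in> Pq q"
  unfolding Pq_iff using prefix_length_prefix[of s "s @ q" q] by simp

lemma notroot: "w \<in> Pq q \<Longrightarrow> s \<in> Pq q \<Longrightarrow> w @ s \<notin> star_root (Pq q)"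
proof -
  assume "w \<in> Pq q" "s \<in> Pq q"
  moreover have "[] \<in> lang_star (Pq q)" unfolding lang_star_def by (rule CollectI, rule exI[of _ "[]"]) simp
  ultimately have "w @ s @ [] \<in> lang_conc (lang_conc (Pq q) (Pq q)) (lang_star (Pq q))"
    unfolding lang_conc_def by blast
  then show ?thesis unfolding star_root_def by simp
qed

lemma root_sub: "star_root P \<subseteq> P" unfolding star_root_def by auto

lemma star_sub: "u \<in> lang_star C \<Longrightarrow> C \<subseteq> Pq q \<Longrightarrow> prefix q (u @ q)"
proof -
  assume "u \<in> lang_star C" "C \<subseteq> Pq q"
  then obtain ws where "u = concat ws" "set ws \<subseteq> Pq q" unfolding lang_star_def by blast
  then show ?thesis using per_concat by simp
qed

lemma len_concat: "\<forall>x\<in>set vs. m \<le> length x \<Longrightarrow> length vs * m \<le> length (concat vs)"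
  by (induction vs) auto

lemma Pq_len: "v \<in> Pq q \<Longrightarrow> length v \<le> length q"
  by (simp add: Pq_iff prefix_length_le)

lemma Pq_cases: "v \<in> Pq q \<Longrightarrow> w \<in> Pq q \<Longrightarrow> prefix v w \<or> prefix w v"
  unfolding Pq_iff using prefix_same_cases by blast

theorem theorem2:
  fixes q q0 qbar :: "'a::finite list" and k :: nat
  assumes "q \<noteq> []"
    and "q0 \<in> Pq q" and "\<forall>v \<in> Pq q. length q0 \<le> length v"
    and "q = concat (replicate k q0) @ qbar" and "strict_prefix qbar q0"
  shows "is_code (star_root (Pq q)) \<and> has_delay (star_root (Pq q)) (k + 1)"
proof
  let ?C = "star_root (Pq q)"
  have CP: "?C \<subseteq> Pq q" by (rule root_sub)
  show "is_code ?C"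
    unfolding is_code_def
  proof (intro allI impI)
    fix ws vs :: "'a list list"
    assume "set ws \<subseteq> ?C \<and> set vs \<subseteq> ?C \<and> concat ws = concat vs"
    then show "ws = vs"
    proof (induction ws arbitrary: vs)
      case Nil
      then have "\<forall>x\<in>set vs. x \<in> Pq q" using CP by blast
      moreover have "\<forall>x\<in>set vs. x = []" using Nil by simp
      ultimately show ?case by (cases vs) (auto simp: Pq_iff)
    next
      case (Cons w ws)
      then have wC: "w \<in> ?C" and wsC: "set ws \<subseteq> ?C" by auto
      have wne: "w \<noteq> []" using wC CP by (auto simp: Pq_iff)
      obtain w' vs' where vs: "vs = w' # vs'"
        using Cons wne by (cases vs) auto
      have w'C: "w' \<in> ?C" and vsC: "set vs' \<subseteq> ?C" using Cons vs by auto
      have eq: "w @ concat ws = w' @ concat vs'" using Cons vs by simp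
      have wP: "w \<in> Pq q" and w'P: "w' \<in> Pq q" using wC w'C CP by auto
      have wsq: "prefix q (concat ws @ q)" using wsC CP per_concat by (meson order_trans)
      have vsq: "prefix q (concat vs' @ q)" using vsC CP per_concat by (meson order_trans)
      have "w = w'"
      proof (rule ccontr)
        assume ne: "w \<noteq> w'"
        have "prefix w w' \<or> prefix w' w" using Pq_cases[OF wP w'P] .
        then show False
        proof
          assume "prefix w w'"
          then obtain s where s: "w' = w @ s" by (auto simp: prefix_def)
          have sne: "s \<noteq> []" using s ne by auto
          have "concat ws = s @ concat vs'" using eq s by simp
          then have "prefix q (s @ concat vs' @ q)" using wsq by simp
          then have "prefix q (s @ q)" using vsq by (rule key)
          moreover have "length s \<le> length q" using s Pq_len[OF w'P] by simp
          ultimately have "s \<in> Pq q" using sne mk by blast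
          then have "w' \<notin> ?C" using notroot[OF wP] s by simp
          then show False using w'C by simp
        next
          assume "prefix w' w"
          then obtain s where s: "w = w' @ s" by (auto simp: prefix_def)
          have sne: "s \<noteq> []" using s ne by auto
          have "concat vs' = s @ concat ws" using eq s by simp
          then have "prefix q (s @ concat ws @ q)" using vsq by simp
          then have "prefix q (s @ q)" using wsq by (rule key)
          moreover have "length s \<le> length q" using s Pq_len[OF wP] by simp
          ultimately have "s \<in> Pq q" using sne mk by blast
          then have "w \<notin> ?C" using notroot[OF w'P] s by simp
          then show False using wC by simp
        qed
      qed
      then have "concat ws = concat vs'" using eq by simp
      then have "ws = vs'" using Cons.IH wsC vsC by blast
      then show ?case using vs \<open>w = w'\<close> by simp
    qed
  qed
  show "has_delay ?C (k + 1)"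
    unfolding has_delay_def
  proof (intro allI impI)
    fix w w' :: "'a list" and vs :: "'a list list" and u
    assume A: "w \<in> ?C \<and> w' \<in> ?C \<and> length vs = k + 1 \<and> set vs \<subseteq> ?C
      \<and> u \<in> lang_star ?C \<and> prefix (w @ concat vs) (w' @ u)"
    let ?V = "concat vs"
    have wC: "w \<in> ?C" and w'C: "w' \<in> ?C" and lvs: "length vs = k + 1"
      and vsC: "set vs \<subseteq> ?C" and uC: "u \<in> lang_star ?C"
      and pre: "prefix (w @ ?V) (w' @ u)" using A by auto
    have wP: "w \<in> Pq q" and w'P: "w' \<in> Pq q" using wC w'C CP by auto
    have uq: "prefix q (u @ q)" using star_sub[OF uC CP] .
    have vsP: "set vs \<subseteq> Pq q" using vsC CP by (meson order_trans)
    have Vq: "prefix q (?V @ q)" using per_concat[OF vsP] .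
    have "\<forall>x\<in>set vs. length q0 \<le> length x" using vsP assms(3) by blast
    then have "length vs * length q0 \<le> length ?V" by (rule len_concat)
    then have l1: "(k+1) * length q0 \<le> length ?V" using lvs by simp
    have l2: "length q = k * length q0 + length qbar"
      using assms(4) by (simp add: length_concat sum_list_replicate)
    have l3: "length qbar < length q0" using assms(5) by (rule prefix_length_less)
    have lenV: "length q \<le> length ?V" using l1 l2 l3 by simp
    have qV: "prefix q ?V" using prefix_length_prefix[OF Vq _ lenV] by simp
    show "w = w'"
    proof (rule ccontr)
      assume ne: "w \<noteq> w'"
      have "prefix w w' \<or> prefix w' w" using Pq_cases[OF wP w'P] .
      then show False
      proof
        assume "prefix w w'"
        then obtain s where s: "w' = w @ s" by (auto simp: prefix_def)
        have sne: "s \<noteq> []" using s ne by auto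
        have "prefix ?V (s @ u)" using pre s by simp
        then have "prefix q (s @ u)" using prefix_order.trans[OF qV] by simp
        then have "prefix q (s @ u @ q)" using prefix_prefix[of q "s @ u" q] by simp
        then have "prefix q (s @ q)" using uq by (rule key)
        moreover have "length s \<le> length q" using s Pq_len[OF w'P] by simp
        ultimately have "s \<in> Pq q" using sne mk by blast
        then have "w' \<notin> ?C" using notroot[OF wP] s by simp
        then show False using w'C by simp
      next
        assume "prefix w' w"
        then obtain s where s: "w = w' @ s" by (auto simp: prefix_def)
        have sne: "s \<noteq> []" using s ne by auto
        have sVu: "prefix (s @ ?V) u" using pre s by simp
        have "length (s @ ?V) \<le> length u" using prefix_length_le[OF sVu] .
        then have "length q \<le> length u" using lenV by simp
        then have qu: "prefix q u" using prefix_length_prefix[OF uq, of u] by simp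
        have "length q \<le> length (s @ ?V)" using lenV by simp
        then have "prefix q (s @ ?V)" using prefix_length_prefix[OF qu sVu] by simp
        then have "prefix q (s @ ?V @ q)" using prefix_prefix[of q "s @ ?V" q] by simp
        then have "prefix q (s @ q)" using Vq by (rule key)
        moreover have "length s \<le> length q" using s Pq_len[OF wP] by simp
        ultimately have "s \<in> Pq q" using sne mk by blast
        then have "w \<notin> ?C" using notroot[OF w'P] s by simp
        then show False using wC by simp
      qed
    qed
  qed
qed

end
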